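(* Let $s$ be an integer such that $3s^2-4s+4$ is a perfect square, let $F_s(t)= t^4 + (4s^3 - 4s^2 + 8s - 4)t^3 + (-6s^2 - 6)t^2 + 4t + 1$, and let $K_s$ be its splitting field over $\mathbb{Q}$. Put $$f=\frac{s+\sqrt{3s^2-4s+4}}{2},\qquad g=\frac{s-\sqrt{3s^2-4s+4}}{2}$$ (integers), and let $M$ be the linear fractional transformation $$M\theta=\frac{f\theta-1}{\frac{f^2+g^2}{2}\theta-g}.$$ Then $\mathrm{Gal}(K_s/\mathbb{Q})$ is cyclic of order $4$, $K_s=\mathbb{Q}(r)$ for any root $r$ of $F_s$, and there is a generator $\sigma$ of $\mathrm{Gal}(K_s/\mathbb{Q})$ such that $\sigma(r)=Mr$ for every root $r$ of $F_s$. *)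

theory Defs
  imports Complex_Main "HOL-Computational_Algebra.Polynomial"
begin

definition is_subfield :: "complex set \<Rightarrow> bool" where
  "is_subfield K \<longleftrightarrow> 0 \<in> K \<and> 1 \<in> K \<and>
     (\<forall>x\<in>K. \<forall>y\<in>K. x + y \<in> K \<and> x * y \<in> K) \<and>
     (\<forall>x\<in>K. - x \<in> K) \<and> (\<forall>x\<in>K. x \<noteq> 0 \<longrightarrow> inverse x \<in> K)"

definition gen_field :: "complex set \<Rightarrow> complex set" where
  "gen_field S = \<Inter> {K. is_subfield K \<and> S \<subseteq> K}"

definition splitting_field :: "complex poly \<Rightarrow> complex set" where
  "splitting_field p = gen_field {z. poly p z = 0}"

text \<open>Gal(K/Q): field automorphisms of K (they automatically fix Q), represented as
  functions that are the identity outside K; group operation is composition.\<close>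
definition Gal :: "complex set \<Rightarrow> (complex \<Rightarrow> complex) set" where
  "Gal K = {\<sigma>. bij_betw \<sigma> K K \<and>
     (\<forall>x\<in>K. \<forall>y\<in>K. \<sigma> (x + y) = \<sigma> x + \<sigma> y \<and> \<sigma> (x * y) = \<sigma> x * \<sigma> y) \<and>
     (\<forall>x. x \<notin> K \<longrightarrow> \<sigma> x = x)}"

definition F :: "int \<Rightarrow> complex poly" where
  "F s = [: 1, 4, of_int (-6*s^2 - 6), of_int (4*s^3 - 4*s^2 + 8*s - 4), 1 :]"

end

theory Submission imports Defs "HOL-Computational_Algebra.Fundamental_Theorem_Algebra" "Berlekamp_Zassenhaus.Reconstruction" begin

definition FZ :: "int \<Rightarrow> int poly" where
  "FZ s = [:1, 4, -6*s^2-6, 4*s^3-4*s^2+8*s-4, 1:]"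
definition FQ :: "int \<Rightarrow> rat poly" where
  "FQ s = map_poly of_int (FZ s)"
definition ev :: "complex \<Rightarrow> rat poly \<Rightarrow> complex" where
  "ev r p = poly (map_poly of_rat p) r"

interpretation ratc: map_poly_comm_ring_hom "of_rat :: rat \<Rightarrow> complex" ..

lemma F_FQ: "F s = map_poly of_rat (FQ s)"
  by (simp add: F_def FQ_def FZ_def map_poly_pCons of_rat_hom.map_poly_pCons_hom of_rat_add of_rat_mult of_rat_diff of_rat_power of_rat_minus)

lemma poly_F_ev: "poly (F s) x = ev x (FQ s)"
  by (simp add: F_FQ ev_def)

lemma degree_FZ: "degree (FZ s) = 4" by (simp add: FZ_def)
lemma degree_FQ: "degree (FQ s) = 4" by (simp add: FQ_def degree_FZ)

lemma ev_add[simp]: "ev r (p + q) = ev r p + ev r q" by (simp add: ev_def of_rat_hom.map_poly_hom_add)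
lemma ev_mult[simp]: "ev r (p * q) = ev r p * ev r q" by (simp add: ev_def ratc.hom_mult ratc.hom_minus)
lemma ev_diff[simp]: "ev r (p - q) = ev r p - ev r q" by (simp add: ev_def ratc.hom_minus)
lemma ev_const[simp]: "ev r [:a:] = of_rat a" by (simp add: ev_def of_rat_hom.map_poly_pCons_hom)
lemma ev_pCons: "ev r (pCons a p) = of_rat a + r * ev r p" by (simp add: ev_def of_rat_hom.map_poly_pCons_hom)
lemma ev_1[simp]: "ev r 1 = 1" by (simp add: ev_def ratc.hom_one)
lemma ev_X[simp]: "ev r [:0,1:] = r" by (simp add: ev_pCons)
lemma ev_0[simp]: "ev r 0 = 0" by (simp add: ev_def)
lemma ev_smult[simp]: "ev r (Polynomial.smult a p) = of_rat a * ev r p" by (simp add: ev_def of_rat_hom.map_poly_hom_smult)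

lemma int_sq_ne: "(x::int)^2 \<noteq> 3" "(x::int)^2 \<noteq> 32"
proof -
  have "\<bar>x\<bar> \<le> 1 \<or> \<bar>x\<bar> = 2 \<or> \<bar>x\<bar> = 3 \<or> \<bar>x\<bar> = 4 \<or> \<bar>x\<bar> = 5 \<or> \<bar>x\<bar> \<ge> 6" by linarith
  moreover have "x^2 = \<bar>x\<bar>^2" by simp
  moreover have "\<bar>x\<bar> \<le> 1 \<Longrightarrow> \<bar>x\<bar>^2 \<le> 1"
    by (intro power_le_one) auto
  moreover have "\<bar>x\<bar> \<ge> 6 \<Longrightarrow> \<bar>x\<bar>^2 \<ge> 36"
  proof -
    assume "\<bar>x\<bar> \<ge> 6"
    hence "\<bar>x\<bar>*\<bar>x\<bar> \<ge> 6*6" by (intro mult_mono) auto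
    thus ?thesis by (simp add: power2_eq_square)
  qed
  ultimately have "x^2 \<le> 1 \<or> x^2 = 4 \<or> x^2 = 9 \<or> x^2 = 16 \<or> x^2 = 25 \<or> x^2 \<ge> 36"
    by (elim disjE) simp_all
  thus "x^2 \<noteq> 3" "x^2 \<noteq> 32" by auto
qed

lemma int_aux1:
  fixes s :: int
  shows "s^3 - s^2 + 2*s - 1 = 1 \<Longrightarrow> s = 1" "s^3 - s^2 + 2*s - 1 = -1 \<Longrightarrow> s = 0"
proof -
  have "s \<le> -1 \<or> s = 0 \<or> s = 1 \<or> s \<ge> 2" by linarith
  moreover have "s \<ge> 2 \<Longrightarrow> s^3 - s^2 + 2*s - 1 \<ge> 3"
  proof -
    assume "s \<ge> 2"
    hence "s^2 * (s - 1) \<ge> 0" by simp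
    moreover have "s^3 - s^2 = s^2*(s-1)" by (simp add: algebra_simps power2_eq_square power3_eq_cube)
    ultimately show ?thesis using \<open>s \<ge> 2\<close> by linarith
  qed
  moreover have "s \<le> -1 \<Longrightarrow> s^3 - s^2 + 2*s - 1 \<le> -3"
  proof -
    assume "s \<le> -1"
    hence "s^2 * (s - 1) \<le> 0" by (simp add: mult_nonneg_nonpos)
    moreover have "s^3 - s^2 = s^2*(s-1)" by (simp add: algebra_simps power2_eq_square power3_eq_cube)
    ultimately show ?thesis using \<open>s \<le> -1\<close> by linarith
  qed
  ultimately show "s^3 - s^2 + 2*s - 1 = 1 \<Longrightarrow> s = 1" "s^3 - s^2 + 2*s - 1 = -1 \<Longrightarrow> s = 0"
    by auto
qed

lemma int_aux2:
  fixes s :: int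
  shows "4*s^3 - 10*s^2 + 8*s - 4 \<noteq> 0" "-4*s^3 - 2*s^2 - 8*s - 4 \<noteq> 0"
proof -
  have "-4*s^3 - 2*s^2 - 8*s - 4 = -2 * ((s^2+2)*(2*s+1))" by (simp add: algebra_simps power2_eq_square power3_eq_cube)
  moreover have "s^2 + 2 \<noteq> 0" by (smt (verit) zero_le_power2)
  moreover have "2*s+1 \<noteq> 0" by presburger
  ultimately show "-4*s^3 - 2*s^2 - 8*s - 4 \<noteq> 0" by simp
  have "s \<le> -1 \<or> s = 0 \<or> s = 1 \<or> s = 2 \<or> s \<ge> 3" by linarith
  moreover have "s \<ge> 3 \<Longrightarrow> 4*s^3 - 10*s^2 + 8*s - 4 > 0"
  proof -
    assume "s \<ge> 3"
    hence "s^2 * (4*s - 10) \<ge> 0" by simp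
    moreover have "4*s^3 - 10*s^2 = s^2*(4*s-10)" by (simp add: algebra_simps power2_eq_square power3_eq_cube)
    ultimately show ?thesis using \<open>s \<ge> 3\<close> by linarith
  qed
  moreover have "s \<le> -1 \<Longrightarrow> 4*s^3 - 10*s^2 + 8*s - 4 < 0"
  proof -
    assume "s \<le> -1"
    hence "s^2 * (4*s - 10) \<le> 0" by (simp add: mult_nonneg_nonpos)
    moreover have "4*s^3 - 10*s^2 = s^2*(4*s-10)" by (simp add: algebra_simps power2_eq_square power3_eq_cube)
    ultimately show ?thesis using \<open>s \<le> -1\<close> by linarith
  qed
  ultimately show "4*s^3 - 10*s^2 + 8*s - 4 \<noteq> 0" by auto
qed

lemma int_quad:
  fixes s k a0 a1 a2 b0 b1 b2 :: int
  assumes k: "k^2 = 3*s^2 - 4*s + 4"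
    and E0: "a0*b0 = 1" and E4: "a2*b2 = 1" and E1: "a0*b1 + a1*b0 = 4"
    and E3: "a1*b2 + a2*b1 = 4*s^3-4*s^2+8*s-4" and E2: "a0*b2 + a1*b1 + a2*b0 = -6*s^2-6"
  shows False
proof -
  from E0 have d: "(a0 = 1 \<and> b0 = 1) \<or> (a0 = -1 \<and> b0 = -1)" by (simp add: zmult_eq_1_iff)
  from E4 have e: "(a2 = 1 \<and> b2 = 1) \<or> (a2 = -1 \<and> b2 = -1)" by (simp add: zmult_eq_1_iff)
  have A: "4*s^3-4*s^2+8*s-4 = 4 \<or> (4*s^3-4*s^2+8*s-4 = -4 \<and> a0*b2 = -1)"
    using d e E1 E3 by auto
  show False
  proof (cases "4*s^3-4*s^2+8*s-4 = 4")
    case True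
    hence "s^3 - s^2 + 2*s - 1 = 1" by linarith
    hence "s = 1" by (rule int_aux1)
    with k int_sq_ne(1)[of k] show False by simp
  next
    case False
    with A have A': "4*s^3-4*s^2+8*s-4 = -4" "a0*b2 = -1" by auto
    hence "s^3 - s^2 + 2*s - 1 = -1" by linarith
    hence s0: "s = 0" by (rule int_aux1)
    have "a2*b0 = -1" using d e A'(2) by auto
    with E2 A'(2) s0 have p: "a1*b1 = -4" by simp
    have "a1 + b1 = 4 \<or> a1 + b1 = -4" using d E1 by auto
    moreover have "(a1-b1)^2 = (a1+b1)^2 - 4*(a1*b1)" by (simp add: power2_eq_square algebra_simps)
    ultimately have "(a1-b1)^2 = 32" using p by auto
    with int_sq_ne(2) show False by blast
  qed
qed


lemma FZ_coeffs: "coeff (FZ s) 0 = 1" "coeff (FZ s) 1 = 4" "coeff (FZ s) 2 = -6*s^2-6"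
   "coeff (FZ s) 3 = 4*s^3-4*s^2+8*s-4" "coeff (FZ s) 4 = 1"
  by (simp_all add: FZ_def numeral_eq_Suc)

lemma FZ_deg1:
  assumes "FZ s = a * b" "degree a = 1" shows False
proof -
  have ne: "a \<noteq> 0" "b \<noteq> 0" using assms degree_FZ[of s] by auto
  have "lead_coeff (FZ s) = 1" using FZ_coeffs(5) degree_FZ by simp
  hence l: "coeff a 1 * lead_coeff b = 1" using assms lead_coeff_mult[of a b] by simp
  have c: "coeff a 0 * coeff b 0 = 1" using FZ_coeffs(1)[of s] assms coeff_mult_0[of a b] by simp
  define x where "x = - coeff a 0 * coeff a 1"
  have a1: "coeff a 1 = 1 \<or> coeff a 1 = -1" using l by (metis zmult_eq_1_iff)
  have a0: "coeff a 0 = 1 \<or> coeff a 0 = -1" using c by (metis zmult_eq_1_iff)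
  have "poly a x = coeff a 0 + coeff a 1 * x"
    using assms(2) by (simp add: poly_altdef)
  also have "\<dots> = 0" using a1 unfolding x_def by auto
  finally have "poly (FZ s) x = 0" using assms(1) by simp
  moreover have "x = 1 \<or> x = -1" using a0 a1 unfolding x_def by auto
  moreover have "poly (FZ s) 1 = 4*s^3 - 10*s^2 + 8*s - 4" by (simp add: FZ_def algebra_simps power2_eq_square)
  moreover have "poly (FZ s) (-1) = -4*s^3 - 2*s^2 - 8*s - 4" by (simp add: FZ_def algebra_simps power2_eq_square)
  ultimately show False using int_aux2[of s] by auto
qed

lemma FZ_deg2:
  assumes k: "k^2 = 3*s^2 - 4*s + 4" and "FZ s = a * b" "degree a = 2" "degree b = 2" shows False
proof -
  have a3: "coeff a n = 0" if "n > 2" for n using that assms(3) by (intro coeff_eq_0) simp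
  have b3: "coeff b n = 0" if "n > 2" for n using that assms(4) by (intro coeff_eq_0) simp
  have cm: "coeff (FZ s) n = (\<Sum>i\<le>n. coeff a i * coeff b (n - i))" for n
    using assms(2) coeff_mult by metis
  have E0: "coeff a 0 * coeff b 0 = 1" using cm[of 0] FZ_coeffs(1)[of s] by simp
  have E1: "coeff a 0 * coeff b 1 + coeff a 1 * coeff b 0 = 4" using cm[of 1] FZ_coeffs(2)[of s] by simp
  have E2: "coeff a 0 * coeff b 2 + coeff a 1 * coeff b 1 + coeff a 2 * coeff b 0 = -6*s^2-6"
    using cm[of 2] FZ_coeffs(3)[of s] by (simp add: numeral_eq_Suc atMost_Suc)
  have E3: "coeff a 1 * coeff b 2 + coeff a 2 * coeff b 1 = 4*s^3-4*s^2+8*s-4"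
    using cm[of 3] FZ_coeffs(4)[of s] a3[of 3] b3[of 3] by (simp add: numeral_eq_Suc atMost_Suc)
  have E4: "coeff a 2 * coeff b 2 = 1"
    using cm[of 4] FZ_coeffs(5)[of s] a3[of 3] b3[of 3] a3[of 4] b3[of 4] by (simp add: numeral_eq_Suc atMost_Suc)
  show False using int_quad[OF k E0 E4 E1 E3] E2 by (simp add: algebra_simps)
qed

lemma FZ_irr:
  assumes k: "k^2 = 3*s^2 - 4*s + 4" and "FZ s = a * b" shows "degree a = 0 \<or> degree b = 0"
proof (rule ccontr)
  assume n: "\<not> (degree a = 0 \<or> degree b = 0)"
  have ne: "a \<noteq> 0" "b \<noteq> 0" using assms degree_FZ[of s] by auto
  have d: "degree a + degree b = 4" using assms(2) degree_mult_eq[OF ne] degree_FZ[of s] by simp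
  have "degree a = 1 \<or> degree b = 1 \<or> (degree a = 2 \<and> degree b = 2)" using n d by linarith
  moreover have "FZ s = b * a" using assms(2) by (simp add: mult.commute)
  ultimately show False using FZ_deg1 FZ_deg2[OF k] assms(2) by blast
qed

lemma FQ_irr:
  assumes k: "k^2 = 3*s^2 - 4*s + 4" and "FQ s = a * b" shows "degree a = 0 \<or> degree b = 0"
proof -
  from rat_to_int_factor[of "FZ s" a b] assms(2)
  obtain a' b' where "FZ s = a' * b'" "degree a' = degree a" "degree b' = degree b"
    unfolding FQ_def by auto
  with FZ_irr[OF k] show ?thesis by metis
qed


lemma FQ_ne: "FQ s \<noteq> 0" using degree_FQ[of s] by auto

lemma ev_uminus[simp]: "ev r (- p) = - ev r p"
  using ev_diff[of r 0 p] by simp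

context
  fixes s k :: int
  assumes k: "k^2 = 3*s^2 - 4*s + 4"
begin

lemma gcd_cases: "degree (gcd (FQ s) p) = 0 \<or> FQ s dvd p"
proof -
  define g where "g = gcd (FQ s) p"
  have gd: "g dvd p" unfolding g_def by simp
  obtain e where e: "FQ s = g * e" unfolding g_def by (meson gcd_dvd1 dvd_def)
  have "degree g = 0 \<or> FQ s dvd g"
  proof (cases "degree e = 0")
    case False
    have "degree g = 0 \<or> degree e = 0" by (rule FQ_irr[OF k e])
    with False have "degree g = 0" by (elim disjE) simp_all
    thus ?thesis by (rule disjI1)
  next
    case True
    from degree0_coeffs[OF True] obtain c where c: "e = [:c:]" by blast
    have c0: "c \<noteq> 0"
    proof
      assume "c = 0"
      hence "e = 0" using c by simp
      hence "FQ s = 0" using e by simp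
      thus False using FQ_ne[of s] by simp
    qed
    have e2: "FQ s = g * [:c:]" using e c by simp
    have "FQ s * [:1/c:] = g * [:c:] * [:1/c:]" using arg_cong[OF e2, of "\<lambda>x. x * [:1/c:]"] .
    also have "\<dots> = g * ([:c:] * [:1/c:])" by (rule mult.assoc)
    also have "[:c:] * [:1/c:] = (1 :: rat poly)" using c0 by simp
    finally have "FQ s * [:1/c:] = g * 1" .
    hence "FQ s dvd g" by (metis dvd_triv_left mult_1_right)
    thus ?thesis by blast
  qed
  thus ?thesis using gd dvd_trans unfolding g_def by blast
qed

lemma ev_zero_dvd:
  assumes r: "ev r (FQ s) = 0" and p: "ev r p = 0" shows "FQ s dvd p"
proof -
  note b = bezout_coefficients_fst_snd[of "FQ s" p]
  show ?thesis
  proof (rule ccontr)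
    assume "\<not> FQ s dvd p"
    hence "degree (gcd (FQ s) p) = 0" using gcd_cases[of p] by blast
    then obtain c where c: "gcd (FQ s) p = [:c:]" by (meson degree0_coeffs)
    have "ev r (gcd (FQ s) p) = 0" using arg_cong[OF b, of "ev r"] r p by simp
    hence "c = 0" using c by simp
    thus False using c FQ_ne[of s] by simp
  qed
qed

lemma ev_inverse:
  assumes r: "ev r (FQ s) = 0" and p: "ev r p \<noteq> 0" shows "\<exists>q. ev r q * ev r p = 1"
proof -
  note b = bezout_coefficients_fst_snd[of "FQ s" p]
  have "\<not> FQ s dvd p" using p r by (auto elim!: dvdE)
  hence "degree (gcd (FQ s) p) = 0" using gcd_cases[of p] by blast
  then obtain c where c: "gcd (FQ s) p = [:c:]" by (meson degree0_coeffs)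
  hence c0: "c \<noteq> 0" using FQ_ne[of s] by auto
  have "ev r (snd (bezout_coefficients (FQ s) p)) * ev r p = of_rat c"
    using arg_cong[OF b, of "ev r"] r c by simp
  hence "ev r (Polynomial.smult (1/c) (snd (bezout_coefficients (FQ s) p))) * ev r p = 1"
    using c0 by (simp add: of_rat_divide field_simps)
  thus ?thesis by blast
qed

lemma subfield_ev:
  assumes r: "ev r (FQ s) = 0" shows "is_subfield (range (ev r))"
  unfolding is_subfield_def
proof (intro conjI ballI impI)
  show "0 \<in> range (ev r)" using ev_0 by (metis rangeI)
  show "1 \<in> range (ev r)" using ev_1 by (metis rangeI)
  fix x y assume "x \<in> range (ev r)" "y \<in> range (ev r)"
  then obtain p q where "x = ev r p" "y = ev r q" by auto
  thus "x + y \<in> range (ev r)" "x * y \<in> range (ev r)"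
    by (metis ev_add rangeI, metis ev_mult rangeI)
next
  fix x assume "x \<in> range (ev r)"
  then obtain p where p: "x = ev r p" by auto
  thus "- x \<in> range (ev r)" by (metis ev_uminus rangeI)
  assume "x \<noteq> 0"
  then obtain q where "ev r q * x = 1" using ev_inverse[OF r] p by blast
  hence "inverse x = ev r q" by (metis inverse_unique mult.commute)
  thus "inverse x \<in> range (ev r)" by simp
qed

end


lemma sf_1: "is_subfield K \<Longrightarrow> 1 \<in> K" by (simp add: is_subfield_def)
lemma sf_add: "is_subfield K \<Longrightarrow> x \<in> K \<Longrightarrow> y \<in> K \<Longrightarrow> x + y \<in> K" by (simp add: is_subfield_def)
lemma sf_mult: "is_subfield K \<Longrightarrow> x \<in> K \<Longrightarrow> y \<in> K \<Longrightarrow> x * y \<in> K" by (simp add: is_subfield_def)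
lemma sf_uminus: "is_subfield K \<Longrightarrow> x \<in> K \<Longrightarrow> - x \<in> K" by (simp add: is_subfield_def)
lemma sf_diff: "is_subfield K \<Longrightarrow> x \<in> K \<Longrightarrow> y \<in> K \<Longrightarrow> x - y \<in> K"
  using sf_add[of K x "-y"] sf_uminus[of K y] by simp
lemma sf_inverse: "is_subfield K \<Longrightarrow> x \<in> K \<Longrightarrow> inverse x \<in> K"
  by (cases "x = 0") (simp_all add: is_subfield_def)
lemma sf_divide: "is_subfield K \<Longrightarrow> x \<in> K \<Longrightarrow> y \<in> K \<Longrightarrow> x / y \<in> K"
  using sf_mult[of K x "inverse y"] sf_inverse[of K y] by (simp add: divide_inverse)

lemma subfield_nat: "is_subfield K \<Longrightarrow> of_nat n \<in> K"
  by (induction n) (auto simp: is_subfield_def)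

lemma subfield_int: assumes K: "is_subfield K" shows "of_int n \<in> K"
proof -
  obtain m where "n = int m \<or> n = - int m" by (metis int_cases2)
  moreover have "of_nat m \<in> K" "- of_nat m \<in> K" using subfield_nat[OF K, of m] K by (auto simp: is_subfield_def)
  ultimately show ?thesis by auto
qed

lemma subfield_rat: assumes K: "is_subfield K" shows "of_rat q \<in> K"
proof (cases q)
  case (Fract a b)
  hence "of_rat q = (of_int a :: complex) * inverse (of_int b)" by (simp add: of_rat_rat divide_inverse)
  moreover have "inverse (of_int b :: complex) \<in> K" using K subfield_int[OF K, of b] Fract
    by (simp add: is_subfield_def)
  ultimately show ?thesis using K subfield_int[OF K, of a] by (simp add: is_subfield_def)
qed

lemma subfield_ev_sub: assumes K: "is_subfield K" and r: "r \<in> K" shows "ev r p \<in> K"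
proof (induction p)
  case (pCons a p)
  thus ?case using K r subfield_rat[OF K, of a] by (simp add: ev_pCons is_subfield_def)
qed (use K in \<open>simp add: is_subfield_def\<close>)

lemma gen_field_ev:
  assumes "k^2 = 3*s^2 - 4*s + 4" "ev r (FQ s) = 0" shows "gen_field {r} = range (ev r)"
proof
  show "gen_field {r} \<subseteq> range (ev r)" unfolding gen_field_def
    using subfield_ev[OF assms] ev_X[of r] by (intro Inter_lower) (auto intro!: image_eqI[of r "ev r" "[:0,1:]"])
  show "range (ev r) \<subseteq> gen_field {r}" unfolding gen_field_def
    using subfield_ev_sub by auto
qed

lemma gen_field_mono: "A \<subseteq> B \<Longrightarrow> gen_field A \<subseteq> gen_field B"
  unfolding gen_field_def by auto

lemma gen_field_least: "is_subfield K \<Longrightarrow> A \<subseteq> K \<Longrightarrow> gen_field A \<subseteq> K"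
  unfolding gen_field_def by auto

section \<open>Automorphisms\<close>

context
  fixes K \<tau>
  assumes K: "is_subfield K" and t: "\<tau> \<in> Gal K"
begin

lemma t_add: "x \<in> K \<Longrightarrow> y \<in> K \<Longrightarrow> \<tau> (x + y) = \<tau> x + \<tau> y" using t by (simp add: Gal_def)
lemma t_mult: "x \<in> K \<Longrightarrow> y \<in> K \<Longrightarrow> \<tau> (x * y) = \<tau> x * \<tau> y" using t by (simp add: Gal_def)
lemma t_inj: "x \<in> K \<Longrightarrow> y \<in> K \<Longrightarrow> \<tau> x = \<tau> y \<Longrightarrow> x = y"
  using t by (auto simp: Gal_def bij_betw_def inj_on_def)
lemma t_in: "x \<in> K \<Longrightarrow> \<tau> x \<in> K" using t by (auto simp: Gal_def bij_betw_def)

lemma t_0: "\<tau> 0 = 0"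
proof -
  have "\<tau> (0 + 0) = \<tau> 0 + \<tau> 0" using K by (intro t_add) (auto simp: is_subfield_def)
  thus ?thesis by simp
qed

lemma t_1: "\<tau> 1 = 1"
proof -
  have k1: "1 \<in> K" "0 \<in> K" using K by (auto simp: is_subfield_def)
  have "\<tau> (1 * 1) = \<tau> 1 * \<tau> 1" using k1 by (intro t_mult) auto
  moreover have "\<tau> 1 \<noteq> 0" using t_inj[OF k1] t_0 by auto
  ultimately show ?thesis by simp
qed

lemma t_uminus: "x \<in> K \<Longrightarrow> \<tau> (- x) = - \<tau> x"
proof -
  assume x: "x \<in> K"
  hence "-x \<in> K" using K by (auto simp: is_subfield_def)
  hence "\<tau> (x + - x) = \<tau> x + \<tau> (-x)" using x by (intro t_add) auto
  hence "\<tau> x + \<tau> (-x) = 0" using t_0 by simp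
  thus ?thesis by (metis neg_eq_iff_add_eq_0)
qed

lemma t_inverse: "x \<in> K \<Longrightarrow> \<tau> (inverse x) = inverse (\<tau> x)"
proof (cases "x = 0")
  case False
  assume x: "x \<in> K"
  hence "inverse x \<in> K" using K False by (auto simp: is_subfield_def)
  hence "\<tau> (x * inverse x) = \<tau> x * \<tau> (inverse x)" using x by (intro t_mult) auto
  hence "\<tau> x * \<tau> (inverse x) = 1" using t_1 False by simp
  thus ?thesis by (metis inverse_unique)
qed (simp add: t_0)

lemma t_divide: "x \<in> K \<Longrightarrow> y \<in> K \<Longrightarrow> \<tau> (x / y) = \<tau> x / \<tau> y"
proof -
  assume xy: "x \<in> K" "y \<in> K"
  hence iy: "inverse y \<in> K" using K by (cases "y = 0") (auto simp: is_subfield_def)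
  have "\<tau> (x * inverse y) = \<tau> x * \<tau> (inverse y)" using xy iy by (intro t_mult)
  also have "\<tau> (inverse y) = inverse (\<tau> y)" using xy by (intro t_inverse)
  finally show ?thesis by (simp add: divide_inverse)
qed

lemma t_diff: "x \<in> K \<Longrightarrow> y \<in> K \<Longrightarrow> \<tau> (x - y) = \<tau> x - \<tau> y"
proof -
  assume xy: "x \<in> K" "y \<in> K"
  hence my: "-y \<in> K" using K by (auto simp: is_subfield_def)
  have "\<tau> (x + - y) = \<tau> x + \<tau> (- y)" using xy my by (intro t_add)
  also have "\<tau> (- y) = - \<tau> y" using xy by (intro t_uminus)
  finally show ?thesis by simp
qed

lemma t_nat: "\<tau> (of_nat n) = of_nat n"
proof (induction n)
  case (Suc n)
  have "\<tau> (1 + of_nat n) = \<tau> 1 + \<tau> (of_nat n)" using K subfield_nat[OF K]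
    by (intro t_add) (auto simp: is_subfield_def)
  thus ?case using Suc t_1 by simp
qed (simp add: t_0)

lemma t_int: "\<tau> (of_int n) = of_int n"
proof -
  obtain m where "n = int m \<or> n = - int m" by (metis int_cases2)
  moreover have "\<tau> (- of_nat m) = - \<tau> (of_nat m)" by (rule t_uminus[OF subfield_nat[OF K]])
  ultimately show ?thesis using t_nat[of m] by auto
qed

lemma t_rat: "\<tau> (of_rat q) = of_rat q"
proof (cases q)
  case (Fract a b)
  hence "of_rat q = (of_int a :: complex) / of_int b" by (simp add: of_rat_rat)
  thus ?thesis using t_divide subfield_int[OF K] t_int by simp
qed

lemma t_ev: "r \<in> K \<Longrightarrow> \<tau> (ev r p) = ev (\<tau> r) p"
proof (induction p)
  case (pCons a p)
  have e: "ev r p \<in> K" using subfield_ev_sub[OF K pCons.prems] .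
  have "\<tau> (of_rat a + r * ev r p) = \<tau> (of_rat a) + \<tau> (r * ev r p)"
    using e pCons.prems subfield_rat[OF K] K by (intro t_add) (auto simp: is_subfield_def)
  also have "\<tau> (r * ev r p) = \<tau> r * \<tau> (ev r p)" using e pCons.prems by (intro t_mult) auto
  finally show ?case using pCons t_rat by (simp add: ev_pCons)
qed (simp add: t_0)

end


section \<open>The Moebius map\<close>

definition fc :: "int \<Rightarrow> int \<Rightarrow> complex" where "fc s k = (of_int s + of_int k) / 2"
definition gc :: "int \<Rightarrow> int \<Rightarrow> complex" where "gc s k = (of_int s - of_int k) / 2"
definition cc :: "int \<Rightarrow> complex" where "cc s = of_int (s^2 - s + 1)"
definition Mc :: "int \<Rightarrow> int \<Rightarrow> complex \<Rightarrow> complex" where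
  "Mc s k x = (fc s k * x - 1) / (cc s * x - gc s k)"
definition Nc :: "int \<Rightarrow> complex \<Rightarrow> complex" where
  "Nc s x = (of_int s * x - 2) / (2 * cc s * x - of_int s)"

lemma cc_ne: "cc s \<noteq> 0"
proof -
  have "s^2 - s + 1 > 0" by (smt (verit) zero_le_power2 power2_eq_square mult_le_cancel_left1)
  thus ?thesis unfolding cc_def by (metis of_int_eq_0_iff less_irrefl)
qed

lemma F_moeb_ident:
 fixes S K X c f g :: complex
 assumes h: "K^2 = 3*S^2 - 4*S + 4" and "f = (S+K)/2" "g = (S-K)/2" "c = S^2-S+1"
 shows "(c*X-g)^4 + 4*(f*X-1)*(c*X-g)^3 + (-6*S^2-6)*(f*X-1)^2*(c*X-g)^2 + (4*S^3-4*S^2+8*S-4)*(f*X-1)^3*(c*X-g) + (f*X-1)^4 = -(K^4/4) * (1 + 4*X + (-6*S^2-6)*X^2 + (4*S^3-4*S^2+8*S-4)*X^3 + X^4)"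
  using assms by Groebner_Basis.algebra

lemma MM_ident:
 fixes S K X c f g m :: complex
 assumes h: "K^2 = 3*S^2 - 4*S + 4" and "f = (S+K)/2" "g = (S-K)/2" "c = S^2-S+1"
   and "m * (c*X - g) = f*X - 1"
 shows "(f * m - 1) * (2 * c * X - S) = (S * X - 2) * (c * m - g)"
  using assms by Groebner_Basis.algebra

lemma NN_ident1:
 fixes S K X c n :: complex
 assumes h: "K^2 = 3*S^2 - 4*S + 4" and "c = S^2-S+1" and "n * (2*c*X - S) = S * X - 2"
 shows "(2 * c * n - S) * (2*c*X - S) + K^2 = 0"
  using assms by Groebner_Basis.algebra

lemma NN_ident2:
 fixes S K X c n w :: complex
 assumes h: "K^2 = 3*S^2 - 4*S + 4" and "c = S^2-S+1" and "n * (2*c*X - S) = S * X - 2"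
   and "(2*c*X - S) * w = 1"
 shows "S * n - 2 = X * (2 * c * n - S)"
  using assms by Groebner_Basis.algebra

lemma fix_ident1:
 fixes S K X c f g :: complex
 assumes "2*f = S+K" "2*g = S-K" "f*X - 1 = X*(c*X - g)"
 shows "c*X^2 - S*X + 1 = 0"
  using assms by Groebner_Basis.algebra

lemma fix_ident2:
 fixes S X c :: complex
 assumes "S*X - 2 = X*(2*c*X - S)"
 shows "c*X^2 - S*X + 1 = 0"
  using assms by Groebner_Basis.algebra

lemma fc2: "2 * fc s k = of_int s + of_int k" by (simp add: fc_def)
lemma gc2: "2 * gc s k = of_int s - of_int k" by (simp add: gc_def)

lemma cc_alt: "cc s = (of_int s)^2 - of_int s + 1" by (simp add: cc_def)

context
  fixes s k :: int
  assumes k: "k^2 = 3*s^2 - 4*s + 4"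
begin

lemma root_dvd: "poly (F s) x = 0 \<Longrightarrow> ev x p = 0 \<Longrightarrow> p \<noteq> 0 \<Longrightarrow> degree p \<ge> 4"
proof -
  assume x: "poly (F s) x = 0" and p: "ev x p = 0" "p \<noteq> 0"
  have "FQ s dvd p" using ev_zero_dvd[OF k] x p by (simp add: poly_F_ev)
  from dvd_imp_degree_le[OF this p(2)] show ?thesis by (simp add: degree_FQ)
qed

lemma root_irr: "poly (F s) x = 0 \<Longrightarrow> x \<notin> \<rat>"
proof
  assume x: "poly (F s) x = 0" and "x \<in> \<rat>"
  then obtain q where q: "x = of_rat q" by (auto elim: Rats_cases)
  have "ev x [:-q, 1:] = 0" using q by (simp add: ev_pCons of_rat_minus)
  from root_dvd[OF x this] show False by simp
qed

lemma root_quad: "poly (F s) x = 0 \<Longrightarrow> cc s * x^2 - of_int s * x + 1 \<noteq> 0"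
proof
  assume x: "poly (F s) x = 0" and e: "cc s * x^2 - of_int s * x + 1 = 0"
  let ?p = "[:1, - of_int s, of_int (s^2 - s + 1):] :: rat poly"
  have "ev x ?p = cc s * x^2 - of_int s * x + 1"
    by (simp add: ev_pCons cc_def of_rat_minus of_rat_add of_rat_diff of_rat_mult power2_eq_square algebra_simps)
  hence "ev x ?p = 0" using e by simp
  moreover have "?p \<noteq> 0" by simp
  moreover have "degree ?p \<le> 2" by simp
  ultimately show False using root_dvd[OF x] by fastforce
qed

lemma gc_rat: "gc s k \<in> \<rat>" unfolding gc_def by (intro Rats_divide Rats_diff Rats_of_int) auto

lemma root_den: "poly (F s) x = 0 \<Longrightarrow> cc s * x - gc s k \<noteq> 0 \<and> 2 * cc s * x - of_int s \<noteq> 0"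
proof -
  assume x: "poly (F s) x = 0"
  have ccr: "cc s \<in> \<rat>" unfolding cc_def by simp
  have "x \<noteq> gc s k / cc s" using root_irr[OF x] gc_rat ccr by (metis Rats_divide)
  moreover have "x \<noteq> of_int s / (2 * cc s)" using root_irr[OF x] ccr
    by (metis Rats_divide Rats_mult Rats_of_int Rats_number_of)
  ultimately show ?thesis using cc_ne[of s] by (auto simp: field_simps)
qed


lemma k_ne: "k \<noteq> 0"
proof
  assume "k = 0"
  hence "3*s^2 - 4*s + 4 = 0" using k by simp
  moreover have "3*s^2 - 4*s + 4 = 2*s^2 + (s-2)^2" by (simp add: power2_eq_square algebra_simps)
  moreover have "2*s^2 + (s-2)^2 > 0"
  proof (cases "s = 0")
    case False thus ?thesis by (simp add: add_pos_nonneg)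
  qed simp
  ultimately show False by linarith
qed

lemma kc: "(of_int k :: complex)^2 = 3*(of_int s)^2 - 4*of_int s + 4"
  using arg_cong[OF k, of "of_int :: int \<Rightarrow> complex"] by simp

lemma poly_F_expand: "poly (F s) z = 1 + 4*z + (-6*(of_int s)^2-6)*z^2 + (4*(of_int s)^3-4*(of_int s)^2+8*(of_int s)-4)*z^3 + z^4"
  by (simp add: F_def algebra_simps power2_eq_square power3_eq_cube power4_eq_xxxx)

lemma M_root: assumes x: "poly (F s) x = 0" shows "poly (F s) (Mc s k x) = 0"
proof -
  define y where "y = cc s * x - gc s k"
  have y0: "y \<noteq> 0" using root_den[OF x] unfolding y_def by blast
  define m where "m = Mc s k x"
  have my: "m * y = fc s k * x - 1" using y0 unfolding m_def Mc_def y_def by simp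
  obtain w where w: "y * w = 1" using y0 by (metis right_inverse)
  have px: "1 + 4*x + (-6*(of_int s)^2-6)*x^2 + (4*(of_int s)^3-4*(of_int s)^2+8*(of_int s)-4)*x^3 + x^4 = 0"
    using x by (simp add: poly_F_expand)
  define A :: complex where "A = 4*(of_int s)^3-4*(of_int s)^2+8*(of_int s)-4"
  define B :: complex where "B = -6*(of_int s)^2-6"
  define z where "z = fc s k * x - 1"
  have id: "y^4 + 4*z*y^3 + B*z^2*y^2 + A*z^3*y + z^4 = -((of_int k)^4/4) * (1 + 4*x + B*x^2 + A*x^3 + x^4)"
    using F_moeb_ident[OF kc fc_def gc_def cc_alt, of x] unfolding y_def z_def A_def B_def by simp
  have px': "1 + 4*x + B*x^2 + A*x^3 + x^4 = 0" using px unfolding A_def B_def .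
  have "(1 + 4*m + B*m^2 + A*m^3 + m^4) * y^4 = y^4 + 4*(m*y)*y^3 + B*(m*y)^2*y^2 + A*(m*y)^3*y + (m*y)^4"
    by Groebner_Basis.algebra
  also have "\<dots> = 0" using id px' my unfolding z_def by simp
  finally have "1 + 4*m + B*m^2 + A*m^3 + m^4 = 0" using y0 by simp
  hence "1 + 4*m + (-6*(of_int s)^2-6)*m^2 + (4*(of_int s)^3-4*(of_int s)^2+8*(of_int s)-4)*m^3 + m^4 = 0"
    unfolding A_def B_def .
  thus ?thesis unfolding m_def by (simp add: poly_F_expand)
qed

lemma MM: assumes x: "poly (F s) x = 0" shows "Mc s k (Mc s k x) = Nc s x"
proof -
  define y where "y = cc s * x - gc s k"
  have y0: "y \<noteq> 0" using root_den[OF x] unfolding y_def by blast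
  define m where "m = Mc s k x"
  have mr: "poly (F s) m = 0" using M_root[OF x] unfolding m_def .
  have y2: "cc s * m - gc s k \<noteq> 0" using root_den[OF mr] by blast
  have d: "2 * cc s * x - of_int s \<noteq> 0" using root_den[OF x] by blast
  have my: "m * y = fc s k * x - 1" using y0 unfolding m_def Mc_def y_def by simp
  obtain w where w: "y * w = 1" using y0 by (metis right_inverse)
  have "(fc s k * m - 1) * (2 * cc s * x - of_int s) = (of_int s * x - 2) * (cc s * m - gc s k)"
    using MM_ident[OF kc fc_def gc_def cc_alt] my unfolding y_def by blast
  hence "(fc s k * m - 1) / (cc s * m - gc s k) = (of_int s * x - 2) / (2 * cc s * x - of_int s)"
    using y2 d by (simp add: frac_eq_eq)
  thus ?thesis unfolding m_def by (simp add: Mc_def[of s k "Mc s k x"] Nc_def)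
qed

lemma NN: assumes x: "poly (F s) x = 0" shows "Nc s (Nc s x) = x"
proof -
  define d where "d = 2 * cc s * x - of_int s"
  have d0: "d \<noteq> 0" using root_den[OF x] unfolding d_def by blast
  define n where "n = Nc s x"
  have nd: "n * d = of_int s * x - 2" using d0 unfolding n_def Nc_def d_def by simp
  obtain w where w: "d * w = 1" using d0 by (metis right_inverse)
  have kk: "(of_int k :: complex) \<noteq> 0" using k_ne by simp
  have "(2 * cc s * n - of_int s) * d + (of_int k)^2 = 0"
    using NN_ident1[OF kc cc_alt] nd unfolding d_def by blast
  hence d2: "2 * cc s * n - of_int s \<noteq> 0" using kk by (auto simp: add_eq_0_iff2)
  have "(of_int s * n - 2) = x * (2 * cc s * n - of_int s)"
    using NN_ident2[OF kc cc_alt] nd w unfolding d_def by blast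
  hence "(of_int s * n - 2) / (2 * cc s * n - of_int s) = x" using d2 by (simp add: divide_eq_eq)
  thus ?thesis unfolding n_def by (simp add: Nc_def[of s "Nc s x"])
qed

lemma M_fix: assumes x: "poly (F s) x = 0" shows "Mc s k x \<noteq> x"
proof
  assume e: "Mc s k x = x"
  have y0: "cc s * x - gc s k \<noteq> 0" using root_den[OF x] by blast
  have "fc s k * x - 1 = x * (cc s * x - gc s k)" using e y0 unfolding Mc_def by (simp add: divide_eq_eq)
  hence "cc s * x^2 - of_int s * x + 1 = 0" by (rule fix_ident1[OF fc2 gc2])
  thus False using root_quad[OF x] by simp
qed

lemma N_fix: assumes x: "poly (F s) x = 0" shows "Nc s x \<noteq> x"
proof
  assume e: "Nc s x = x"
  have y0: "2 * cc s * x - of_int s \<noteq> 0" using root_den[OF x] by blast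
  have "of_int s * x - 2 = x * (2 * cc s * x - of_int s)" using e y0 unfolding Nc_def by (simp add: divide_eq_eq)
  hence "cc s * x^2 - of_int s * x + 1 = 0" by (rule fix_ident2)
  thus False using root_quad[OF x] by simp
qed


lemma F_ne: "F s \<noteq> 0" by (simp add: F_def)
lemma degree_F: "degree (F s) = 4" by (simp add: F_def)

lemma roots_card: "finite {z. poly (F s) z = 0}" "card {z. poly (F s) z = 0} \<le> 4"
  using poly_roots_finite[OF F_ne] card_poly_roots_bound[OF F_ne] degree_F by auto

lemma orbit:
  assumes x: "poly (F s) x = 0"
  shows "{z. poly (F s) z = 0} = {x, Mc s k x, Mc s k (Mc s k x), Mc s k (Mc s k (Mc s k x))}"
    and "Mc s k (Mc s k (Mc s k (Mc s k x))) = x"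
    and "card {z. poly (F s) z = 0} = 4"
    and "distinct [x, Mc s k x, Mc s k (Mc s k x), Mc s k (Mc s k (Mc s k x))]"
proof -
  define x1 where "x1 = Mc s k x"
  define x2 where "x2 = Mc s k x1"
  define x3 where "x3 = Mc s k x2"
  have r1: "poly (F s) x1 = 0" unfolding x1_def using M_root[OF x] .
  have r2: "poly (F s) x2 = 0" unfolding x2_def using M_root[OF r1] .
  have r3: "poly (F s) x3 = 0" unfolding x3_def using M_root[OF r2] .
  have n2: "x2 = Nc s x" unfolding x2_def x1_def using MM[OF x] .
  have n3: "x3 = Nc s x1" unfolding x3_def x2_def using MM[OF r1] .
  have m4: "Mc s k x3 = x" unfolding x3_def using MM[OF r2] n2 NN[OF x] by simp
  thus "Mc s k (Mc s k (Mc s k (Mc s k x))) = x" unfolding x3_def x2_def x1_def .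
  have d: "x \<noteq> x1" "x1 \<noteq> x2" "x2 \<noteq> x3" "x \<noteq> x2" "x1 \<noteq> x3" "x \<noteq> x3"
    using M_fix[OF x] M_fix[OF r1] M_fix[OF r2] N_fix[OF x] N_fix[OF r1] m4 n2 n3
    unfolding x1_def x2_def x3_def by metis+
  have sub: "{x, x1, x2, x3} \<subseteq> {z. poly (F s) z = 0}" using x r1 r2 r3 by auto
  have c4: "card {x, x1, x2, x3} = 4" using d by auto
  have "{x, x1, x2, x3} = {z. poly (F s) z = 0}"
    using card_subset_eq[OF roots_card(1) sub] c4 roots_card(2) card_mono[OF roots_card(1) sub] by linarith
  thus "{z. poly (F s) z = 0} = {x, Mc s k x, Mc s k (Mc s k x), Mc s k (Mc s k (Mc s k x))}"
    unfolding x3_def x2_def x1_def by simp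
  show "card {z. poly (F s) z = 0} = 4" using c4 \<open>{x, x1, x2, x3} = _\<close> by simp
  show "distinct [x, Mc s k x, Mc s k (Mc s k x), Mc s k (Mc s k (Mc s k x))]"
    using d unfolding x3_def x2_def x1_def by auto
qed

lemma rat_of_Rats: "(z::complex) \<in> \<rat> \<Longrightarrow> is_subfield K \<Longrightarrow> z \<in> K"
  by (auto elim!: Rats_cases simp: subfield_rat)

lemma consts_rat: "fc s k \<in> \<rat>" "gc s k \<in> \<rat>" "cc s \<in> \<rat>"
  unfolding fc_def gc_def cc_def by (intro Rats_divide Rats_diff Rats_add Rats_of_int; simp)+

lemma M_in: assumes K: "is_subfield K" and y: "y \<in> K" shows "Mc s k y \<in> K"
proof -
  have c: "fc s k \<in> K" "gc s k \<in> K" "cc s \<in> K" using consts_rat rat_of_Rats K by auto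
  have 1: "fc s k * y - 1 \<in> K" using K c y by (intro sf_diff sf_mult sf_1)
  have 2: "cc s * y - gc s k \<in> K" using K c y by (intro sf_diff sf_mult)
  show ?thesis unfolding Mc_def using K 1 2 by (rule sf_divide)
qed

lemma K_eq:
  assumes r: "poly (F s) r = 0"
  shows "splitting_field (F s) = range (ev r)" "splitting_field (F s) = gen_field {r}"
proof -
  have er: "ev r (FQ s) = 0" using r by (simp add: poly_F_ev)
  have SF: "is_subfield (range (ev r))" by (rule subfield_ev[OF k er])
  have rin: "r \<in> range (ev r)" by (metis ev_X rangeI)
  have "{z. poly (F s) z = 0} \<subseteq> range (ev r)"
    using orbit(1)[OF r] rin M_in[OF SF] by auto
  hence "splitting_field (F s) \<subseteq> range (ev r)" unfolding splitting_field_def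
    by (rule gen_field_least[OF SF])
  moreover have "range (ev r) \<subseteq> splitting_field (F s)"
    unfolding gen_field_ev[OF k er, symmetric] splitting_field_def by (rule gen_field_mono) (use r in auto)
  ultimately show "splitting_field (F s) = range (ev r)" by blast
  thus "splitting_field (F s) = gen_field {r}" using gen_field_ev[OF k er] by simp
qed

end


section \<open>Galois group\<close>

lemma Gal_id: "id \<in> Gal K" by (simp add: Gal_def)

lemma Gal_comp: "a \<in> Gal K \<Longrightarrow> b \<in> Gal K \<Longrightarrow> a \<circ> b \<in> Gal K"
proof -
  assume a: "a \<in> Gal K" and b: "b \<in> Gal K"
  have ba: "bij_betw a K K" "bij_betw b K K" using a b by (auto simp: Gal_def)
  have bin: "b x \<in> K" if "x \<in> K" for x using ba(2) that by (auto simp: bij_betw_def)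
  show ?thesis unfolding Gal_def
  proof (intro CollectI conjI ballI allI impI)
    show "bij_betw (a \<circ> b) K K" using ba by (rule bij_betw_trans[rotated])
  next
    fix x y assume xy: "x \<in> K" "y \<in> K"
    show "(a \<circ> b) (x + y) = (a \<circ> b) x + (a \<circ> b) y" "(a \<circ> b) (x * y) = (a \<circ> b) x * (a \<circ> b) y"
      using xy bin a b by (auto simp: Gal_def)
  next
    fix x assume "x \<notin> K" thus "(a \<circ> b) x = x" using a b by (auto simp: Gal_def)
  qed
qed

lemma Gal_pow: "a \<in> Gal K \<Longrightarrow> a ^^ n \<in> Gal K"
  by (induction n) (auto simp: Gal_id Gal_comp)

context
  fixes s k :: int and r0 :: complex
  assumes k: "k^2 = 3*s^2 - 4*s + 4" and r0: "poly (F s) r0 = 0"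
begin

definition sig :: "complex \<Rightarrow> complex \<Rightarrow> complex" where
  "sig y z = (if z \<in> splitting_field (F s) then ev y (SOME p. z = ev r0 p) else z)"

lemma KS: "splitting_field (F s) = range (ev r0)" by (rule K_eq(1)[OF k r0])

lemma K_sub: "is_subfield (splitting_field (F s))"
  unfolding KS using r0 by (intro subfield_ev[OF k]) (simp add: poly_F_ev)

lemma ev_transfer:
  assumes x: "poly (F s) x = 0" and y: "poly (F s) y = 0" and e: "ev x p = ev x q"
  shows "ev y p = ev y q"
proof -
  have "ev x (p - q) = 0" using e by simp
  hence "FQ s dvd (p - q)" using ev_zero_dvd[OF k] x by (simp add: poly_F_ev)
  then obtain t where "p - q = FQ s * t" by (auto elim: dvdE)
  hence "ev y (p - q) = 0" using y by (simp add: poly_F_ev)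
  thus ?thesis by simp
qed

lemma sig_ev: assumes y: "poly (F s) y = 0" shows "sig y (ev r0 p) = ev y p"
proof -
  have inK: "ev r0 p \<in> splitting_field (F s)" unfolding KS by simp
  define q where "q = (SOME q. ev r0 p = ev r0 q)"
  have "ev r0 p = ev r0 q" unfolding q_def by (rule someI[of _ p]) simp
  hence "ev y q = ev y p" using ev_transfer[OF r0 y] by metis
  thus ?thesis unfolding sig_def using inK q_def by simp
qed

lemma sig_r0: assumes y: "poly (F s) y = 0" shows "sig y r0 = y"
proof -
  have "sig y (ev r0 [:0,1:]) = ev y [:0,1:]" by (rule sig_ev[OF y])
  thus ?thesis by (simp only: ev_X)
qed

lemma sig_Gal: assumes y: "poly (F s) y = 0" shows "sig y \<in> Gal (splitting_field (F s))"
  unfolding Gal_def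
proof (intro CollectI conjI ballI allI impI)
  have KY: "splitting_field (F s) = range (ev y)" by (rule K_eq(1)[OF k y])
  show "bij_betw (sig y) (splitting_field (F s)) (splitting_field (F s))"
    unfolding bij_betw_def
  proof
    show "inj_on (sig y) (splitting_field (F s))" unfolding KS inj_on_def
    proof (intro ballI impI)
      fix a b assume "a \<in> range (ev r0)" "b \<in> range (ev r0)" "sig y a = sig y b"
      then obtain p q where pq: "a = ev r0 p" "b = ev r0 q" "ev y p = ev y q" using sig_ev[OF y] by auto
      thus "a = b" using ev_transfer[OF y r0] by metis
    qed
    have "sig y ` range (ev r0) = range (ev y)" by (simp only: image_image sig_ev[OF y])
    thus "sig y ` splitting_field (F s) = splitting_field (F s)"
      using KY KS by simp
  qed
next
  fix a b assume "a \<in> splitting_field (F s)" "b \<in> splitting_field (F s)"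
  then obtain p q where pq: "a = ev r0 p" "b = ev r0 q" unfolding KS by auto
  have "sig y (a + b) = ev y (p + q)" using pq sig_ev[OF y, of "p+q"] by simp
  thus "sig y (a + b) = sig y a + sig y b" using sig_ev[OF y] pq by simp
  have "sig y (a * b) = ev y (p * q)" using pq sig_ev[OF y, of "p*q"] by simp
  thus "sig y (a * b) = sig y a * sig y b" using sig_ev[OF y] pq by simp
next
  fix z assume "z \<notin> splitting_field (F s)" thus "sig y z = z" by (simp add: sig_def)
qed

lemma Gal_root: assumes t: "\<tau> \<in> Gal (splitting_field (F s))" shows "poly (F s) (\<tau> r0) = 0"
proof -
  have rin: "r0 \<in> splitting_field (F s)" unfolding KS by (metis ev_X rangeI)
  have "\<tau> (ev r0 (FQ s)) = ev (\<tau> r0) (FQ s)" by (rule t_ev[OF K_sub t rin])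
  moreover have "ev r0 (FQ s) = 0" using r0 by (simp add: poly_F_ev)
  ultimately show ?thesis using t_0[OF K_sub t] by (simp add: poly_F_ev)
qed

lemma Gal_det: assumes t: "\<tau> \<in> Gal (splitting_field (F s))" shows "\<tau> = sig (\<tau> r0)"
proof
  fix z
  have rin: "r0 \<in> splitting_field (F s)" unfolding KS by (metis ev_X rangeI)
  show "\<tau> z = sig (\<tau> r0) z"
  proof (cases "z \<in> splitting_field (F s)")
    case True
    then obtain p where p: "z = ev r0 p" unfolding KS by auto
    show ?thesis using t_ev[OF K_sub t rin, of p] sig_ev[OF Gal_root[OF t], of p] p by simp
  next
    case False thus ?thesis using t by (simp add: Gal_def sig_def)
  qed
qed

lemma Gal_eq: "Gal (splitting_field (F s)) = sig ` {z. poly (F s) z = 0}"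
proof
  show "Gal (splitting_field (F s)) \<subseteq> sig ` {z. poly (F s) z = 0}"
    using Gal_det Gal_root by blast
  show "sig ` {z. poly (F s) z = 0} \<subseteq> Gal (splitting_field (F s))"
    using sig_Gal by blast
qed

lemma Gal_card: "card (Gal (splitting_field (F s))) = 4"
proof -
  have "inj_on sig {z. poly (F s) z = 0}"
  proof (rule inj_onI)
    fix x y assume x: "x \<in> {z. poly (F s) z = 0}" and y: "y \<in> {z. poly (F s) z = 0}" and e: "sig x = sig y"
    have "x = sig x r0" using sig_r0 x by simp
    also have "\<dots> = sig y r0" using e by simp
    also have "\<dots> = y" using sig_r0 y by simp
    finally show "x = y" .
  qed
  hence "card (Gal (splitting_field (F s))) = card {z. poly (F s) z = 0}"
    unfolding Gal_eq by (rule card_image)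
  also have "\<dots> = 4" by (rule orbit(3)[OF k r0])
  finally show ?thesis .
qed


lemma t_Rats: assumes t: "\<tau> \<in> Gal (splitting_field (F s))" and z: "z \<in> \<rat>" shows "\<tau> z = z"
  using z t_rat[OF K_sub t] by (auto elim!: Rats_cases)

lemma t_M: assumes t: "\<tau> \<in> Gal (splitting_field (F s))" and y: "y \<in> splitting_field (F s)"
  shows "\<tau> (Mc s k y) = Mc s k (\<tau> y)"
proof -
  note KS = K_sub
  have c: "fc s k \<in> splitting_field (F s)" "gc s k \<in> splitting_field (F s)" "cc s \<in> splitting_field (F s)"
    using consts_rat[OF k] rat_of_Rats[OF k] KS by auto
  have tc: "\<tau> (fc s k) = fc s k" "\<tau> (gc s k) = gc s k" "\<tau> (cc s) = cc s"
    using t_Rats[OF t] consts_rat[OF k] by auto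
  have 1: "fc s k * y - 1 \<in> splitting_field (F s)" using KS c y by (intro sf_diff sf_mult sf_1)
  have 2: "cc s * y - gc s k \<in> splitting_field (F s)" using KS c y by (intro sf_diff sf_mult)
  have "\<tau> (Mc s k y) = \<tau> (fc s k * y - 1) / \<tau> (cc s * y - gc s k)"
    unfolding Mc_def by (rule t_divide[OF KS t 1 2])
  also have "\<tau> (fc s k * y - 1) = \<tau> (fc s k * y) - \<tau> 1"
    using KS c y by (intro t_diff[OF KS t] sf_mult sf_1)
  also have "\<tau> (fc s k * y) = fc s k * \<tau> y" using t_mult[OF KS t c(1) y] tc by simp
  also have "\<tau> (cc s * y - gc s k) = \<tau> (cc s * y) - \<tau> (gc s k)"
    using KS c y by (intro t_diff[OF KS t] sf_mult)
  also have "\<tau> (cc s * y) = cc s * \<tau> y" using t_mult[OF KS t c(3) y] tc by simp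
  finally show ?thesis using tc t_1[OF KS t] unfolding Mc_def by simp
qed

lemma rin_K: "poly (F s) y = 0 \<Longrightarrow> y \<in> splitting_field (F s)"
  unfolding K_eq(2)[OF k] gen_field_def by auto

definition sigma where "sigma = sig (Mc s k r0)"

lemma sigma_Gal: "sigma \<in> Gal (splitting_field (F s))"
  unfolding sigma_def using sig_Gal M_root[OF k r0] by blast

lemma sigma_roots: assumes y: "poly (F s) y = 0" shows "sigma y = Mc s k y"
proof -
  let ?M = "Mc s k"
  have s0: "sigma r0 = ?M r0" unfolding sigma_def using sig_r0 M_root[OF k r0] by blast
  have step: "sigma (?M x) = ?M (?M x)" if "sigma x = ?M x" "poly (F s) x = 0" for x
    using t_M[OF sigma_Gal rin_K[OF that(2)]] that(1) by simp
  have r1: "poly (F s) (?M r0) = 0" using M_root[OF k r0] .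
  have r2: "poly (F s) (?M (?M r0)) = 0" using M_root[OF k r1] .
  have s1: "sigma (?M r0) = ?M (?M r0)" using step[OF s0 r0] .
  have s2: "sigma (?M (?M r0)) = ?M (?M (?M r0))" using step[OF s1 r1] .
  have s3: "sigma (?M (?M (?M r0))) = ?M (?M (?M (?M r0)))" using step[OF s2 r2] .
  have "y \<in> {r0, ?M r0, ?M (?M r0), ?M (?M (?M r0))}" using orbit(1)[OF k r0] y by blast
  thus ?thesis using s0 s1 s2 s3 by auto
qed

lemma sigma_generates: "Gal (splitting_field (F s)) = range (\<lambda>n. sigma ^^ n)"
proof -
  let ?M = "Mc s k"
  let ?G = "Gal (splitting_field (F s))"
  have sub: "range (\<lambda>n. sigma ^^ n) \<subseteq> ?G" using Gal_pow[OF sigma_Gal] by blast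
  have r1: "poly (F s) (?M r0) = 0" using M_root[OF k r0] .
  have r2: "poly (F s) (?M (?M r0)) = 0" using M_root[OF k r1] .
  have p1: "(sigma ^^ 1) r0 = ?M r0" using sigma_roots[OF r0] by simp
  have p2: "(sigma ^^ 2) r0 = ?M (?M r0)" using sigma_roots[OF r0] sigma_roots[OF r1]
    by (simp add: numeral_2_eq_2)
  have p3: "(sigma ^^ 3) r0 = ?M (?M (?M r0))" using sigma_roots[OF r0] sigma_roots[OF r1] sigma_roots[OF r2]
    by (simp add: numeral_3_eq_3)
  have p0: "(sigma ^^ 0) r0 = r0" by simp
  have dist: "distinct [r0, ?M r0, ?M (?M r0), ?M (?M (?M r0))]" by (rule orbit(4)[OF k r0])
  have "card {sigma ^^ 0, sigma ^^ 1, sigma ^^ 2, sigma ^^ 3} = 4"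
  proof -
    have "distinct [sigma ^^ 0, sigma ^^ 1, sigma ^^ 2, sigma ^^ 3]"
      using dist p0 p1 p2 p3 by (auto dest: fun_cong[where x = r0])
    thus ?thesis by (simp add: distinct_card[symmetric] del: funpow.simps)
  qed
  moreover have "{sigma ^^ 0, sigma ^^ 1, sigma ^^ 2, sigma ^^ 3} \<subseteq> range (\<lambda>n. sigma ^^ n)"
    unfolding insert_subset by (intro conjI empty_subsetI rangeI)
  moreover have fin: "finite ?G" using Gal_card by (metis card.infinite zero_neq_numeral)
  ultimately have "card (range (\<lambda>n. sigma ^^ n)) \<ge> 4"
    by (metis card_mono finite_subset[OF sub fin])
  hence "card (range (\<lambda>n. sigma ^^ n)) = card ?G" using Gal_card card_mono[OF fin sub] by simp
  thus ?thesis using card_subset_eq[OF fin sub] by simp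
qed

end

theorem mainTheorem5:
  fixes s :: int
  assumes sq: "\<exists>k::int. 3*s^2 - 4*s + 4 = k^2"
  defines "f \<equiv> (real_of_int s + sqrt (real_of_int (3*s^2 - 4*s + 4))) / 2"
      and "g \<equiv> (real_of_int s - sqrt (real_of_int (3*s^2 - 4*s + 4))) / 2"
  defines "M \<equiv> (\<lambda>\<theta>::complex. (of_real f * \<theta> - 1) /
                   (of_real ((f^2 + g^2) / 2) * \<theta> - of_real g))"
  defines "K \<equiv> splitting_field (F s)"
  shows "card (Gal K) = 4 \<and> (\<exists>\<tau>\<in>Gal K. Gal K = range (\<lambda>n. \<tau> ^^ n)) \<and>
         (\<forall>r. poly (F s) r = 0 \<longrightarrow> K = gen_field {r}) \<and>
         (\<exists>\<sigma>\<in>Gal K. Gal K = range (\<lambda>n. \<sigma> ^^ n) \<and>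
           (\<forall>r. poly (F s) r = 0 \<longrightarrow> \<sigma> r = M r))"
proof -
  obtain k0 where k0: "3*s^2 - 4*s + 4 = k0^2" using sq by blast
  define k where "k = \<bar>k0\<bar>"
  have k: "k^2 = 3*s^2 - 4*s + 4" unfolding k_def using k0 by simp
  have kpos: "k \<ge> 0" unfolding k_def by simp
  have sqr: "sqrt (real_of_int (3*s^2 - 4*s + 4)) = real_of_int k"
  proof -
    have "real_of_int (3*s^2 - 4*s + 4) = (real_of_int k)^2" using k by (metis of_int_power)
    thus ?thesis using kpos by simp
  qed
  have fk: "f = (real_of_int s + real_of_int k) / 2" unfolding f_def sqr ..
  have gk: "g = (real_of_int s - real_of_int k) / 2" unfolding g_def sqr ..
  have kr: "(real_of_int k)^2 = 3*(real_of_int s)^2 - 4*real_of_int s + 4"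
    using arg_cong[OF k, of "real_of_int"] by simp
  have cr: "(f^2 + g^2) / 2 = (real_of_int s)^2 - real_of_int s + 1"
  proof -
    have "(f^2 + g^2) / 2 = ((real_of_int s)^2 + (real_of_int k)^2) / 4"
      unfolding fk gk by (simp add: field_simps power2_eq_square)
    also have "\<dots> = (real_of_int s)^2 - real_of_int s + 1" using kr by simp
    finally show ?thesis .
  qed
  have MM: "M = Mc s k"
  proof
    fix \<theta> :: complex
    have 1: "(of_real f :: complex) = fc s k" unfolding fk fc_def by simp
    have 2: "(of_real g :: complex) = gc s k" unfolding gk gc_def by simp
    have 3: "(of_real ((f^2 + g^2) / 2) :: complex) = cc s" unfolding cr cc_def by simp
    show "M \<theta> = Mc s k \<theta>" unfolding M_def Mc_def 1 2 3 ..
  qed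
  have "\<exists>z. poly (F s) z = 0"
    by (rule fundamental_theorem_of_algebra_alt) (simp add: F_def)
  then obtain r0 where r0: "poly (F s) r0 = 0" by blast
  have c4: "card (Gal K) = 4" unfolding K_def by (rule Gal_card[OF k r0])
  have gen: "\<forall>r. poly (F s) r = 0 \<longrightarrow> K = gen_field {r}" unfolding K_def using K_eq(2)[OF k] by blast
  have sg: "\<exists>\<sigma>\<in>Gal K. Gal K = range (\<lambda>n. \<sigma> ^^ n) \<and> (\<forall>r. poly (F s) r = 0 \<longrightarrow> \<sigma> r = M r)"
    unfolding K_def MM using sigma_Gal[OF k r0] sigma_generates[OF k r0] sigma_roots[OF k r0] by blast
  thus ?thesis using c4 gen by blast
qed

end
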